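(* Let $p(z)=\sum_{j=0}^d a_j z^j$ be a complex polynomial of degree $d \geq 2$ and let $B$ be a closed convex subset of $\mathbb{C}$ containing all zeros of $p'$. Then the set $C_B$ of all $w \in \mathbb{C}$ such that all zeros of the polynomial $z \mapsto p(z)-w$ lie in $B$ is a convex set.
   Context: Convexity is with respect to the real vector space structure $\mathbb{C}\cong\mathbb{R}^2$. *)

theory Defs
  imports "HOL-Analysis.Analysis" "HOL-Computational_Algebra.Polynomial"
begin

end

theory Submission
  imports Defs "HOL-Computational_Algebra.Fundamental_Theorem_Algebra"
begin

lemma re_div_pos:
  fixes u v :: complex
  assumes "Re (cnj u * v) > 0"
  shows "Re (u / v) > 0"
proof -
  have a: "Re u * Re v + Im u * Im v > 0" using assms by simp
  hence "v \<noteq> 0" by auto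
  hence b: "(Re v)\<^sup>2 + (Im v)\<^sup>2 > 0"
    by (simp add: complex_eq_iff sum_power2_gt_zero_iff)
  show ?thesis unfolding Re_divide using a b by (simp add: divide_pos_pos)
qed

lemma re_div_pos_rev:
  fixes c v :: complex
  assumes "Re (c / v) > 0"
  shows "Re (cnj c * v) > 0"
proof -
  have "(Re c * Re v + Im c * Im v) / ((Re v)\<^sup>2 + (Im v)\<^sup>2) > 0"
    using assms unfolding Re_divide by simp
  moreover have "(Re v)\<^sup>2 + (Im v)\<^sup>2 \<ge> 0" by simp
  ultimately have "Re c * Re v + Im c * Im v > 0"
    by (simp add: zero_less_divide_iff)
  thus ?thesis by simp
qed

lemma key:
  fixes u z :: complex
  assumes "\<forall>x\<in>#A. Re (cnj u * (z - x)) > 0"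
  shows "poly (\<Prod>x\<in>#A. [:-x, 1:]) z \<noteq> 0 \<and>
    (A \<noteq> {#} \<longrightarrow> Re (u * (poly (pderiv (\<Prod>x\<in>#A. [:-x, 1:])) z / poly (\<Prod>x\<in>#A. [:-x, 1:]) z)) > 0)"
  using assms
proof (induction A)
  case empty
  then show ?case by simp
next
  case (add a A)
  define q where "q = (\<Prod>x\<in>#A. [:-x, 1:])"
  have ih: "poly q z \<noteq> 0" "A \<noteq> {#} \<longrightarrow> Re (u * (poly (pderiv q) z / poly q z)) > 0"
    using add by (auto simp: q_def)
  have ha: "Re (cnj u * (z - a)) > 0" using add.prems by simp
  hence za: "z - a \<noteq> 0" by auto
  have ge: "Re (u * (poly (pderiv q) z / poly q z)) \<ge> 0"
    using ih by (cases "A = {#}") (auto simp: q_def)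
  have pa: "Re (u / (z - a)) > 0" using re_div_pos[OF ha] .
  have dd: "poly (pderiv ([:-a,1:] * q)) z = (z - a) * poly (pderiv q) z + poly q z"
    by (simp only: pderiv_mult poly_add poly_mult) (simp add: pderiv_pCons algebra_simps)
  have eq: "u * (poly (pderiv ([:-a,1:] * q)) z / poly ([:-a,1:] * q) z)
      = u * (poly (pderiv q) z / poly q z) + u / (z - a)"
    using za ih(1) by (simp only: dd poly_mult) (simp add: field_simps)
  show ?case
    using za ih(1) ge pa eq by (simp add: q_def)
qed

theorem mainTheorem2:
  fixes p :: "complex poly" and B :: "complex set"
  assumes "degree p \<ge> 2"
    and "closed B" and "convex B"
    and "\<And>z. poly (pderiv p) z = 0 \<Longrightarrow> z \<in> B"
  shows "convex {w. \<forall>z. poly (p - [:w:]) z = 0 \<longrightarrow> z \<in> B}"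
proof (rule convexI)
  fix w0 w1 :: complex and s t :: real
  assume w0: "w0 \<in> {w. \<forall>z. poly (p - [:w:]) z = 0 \<longrightarrow> z \<in> B}"
    and w1: "w1 \<in> {w. \<forall>z. poly (p - [:w:]) z = 0 \<longrightarrow> z \<in> B}"
    and st: "0 \<le> s" "0 \<le> t" "s + t = 1"
  show "s *\<^sub>R w0 + t *\<^sub>R w1 \<in> {w. \<forall>z. poly (p - [:w:]) z = 0 \<longrightarrow> z \<in> B}"
  proof (clarify, rule ccontr)
    fix z assume pz: "poly (p - [:s *\<^sub>R w0 + t *\<^sub>R w1:]) z = 0" and zB: "z \<notin> B"
    obtain a b where ab: "inner a z < b" "\<forall>x\<in>B. inner a x > b"
      using separating_hyperplane_closed_point[OF assms(3,2) zB] by blast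
    define u where "u = - a"
    have sep: "\<And>x. x \<in> B \<Longrightarrow> Re (cnj u * (z - x)) > 0"
    proof -
      fix x assume "x \<in> B"
      hence "inner a x > inner a z" using ab by force
      thus "Re (cnj u * (z - x)) > 0" by (simp add: u_def inner_complex_def algebra_simps)
    qed
    define P where "P = poly p z"
    define D where "D = poly (pderiv p) z"
    have lin: "Re (cnj (u * D) * (P - w)) > 0" if w: "w \<in> {w. \<forall>z. poly (p - [:w:]) z = 0 \<longrightarrow> z \<in> B}" for w
    proof -
      let ?q = "p - [:w:]"
      have dq: "degree ?q = degree p"
      proof -
        have "?q = p + [:-w:]" by simp
        moreover have "degree (p + [:-w:]) = degree p"
          using assms(1) by (intro degree_add_eq_left) auto
        ultimately show ?thesis by metis
      qed
      hence q0: "?q \<noteq> 0" using assms(1) by auto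
      obtain A where A: "size A = degree ?q" "?q = smult (lead_coeff ?q) (\<Prod>x\<in>#A. [:-x, 1:])"
        using alg_closed_imp_factorization[OF q0] by blast
      define L where "L = lead_coeff ?q"
      have AL: "?q = smult L (\<Prod>x\<in>#A. [:-x, 1:])" using A(2) by (simp only: L_def)
      have lc: "L \<noteq> 0" using q0 unfolding L_def by (metis leading_coeff_0_iff)
      have roots: "\<forall>x\<in>#A. Re (cnj u * (z - x)) > 0"
      proof
        fix x assume "x \<in># A"
        then obtain A' where "A = add_mset x A'" by (metis multi_member_split)
        hence "poly (\<Prod>x\<in>#A. [:-x, 1:]) x = 0" by simp
        hence "poly ?q x = 0" by (subst AL) simp
        hence "x \<in> B" using w by blast
        thus "Re (cnj u * (z - x)) > 0" using sep by blast
      qed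
      have Ane: "A \<noteq> {#}" using A(1) dq assms(1) by auto
      note k = key[OF roots]
      define Q where "Q = (\<Prod>x\<in>#A. [:-x, 1:])"
      have PQ: "P - w = L * poly Q z"
      proof -
        have "P - w = poly ?q z" by (simp add: P_def)
        also have "\<dots> = L * poly Q z" unfolding Q_def by (subst AL) simp
        finally show ?thesis .
      qed
      have DQ: "D = L * poly (pderiv Q) z"
      proof -
        have "pderiv ?q = pderiv p" by (simp add: pderiv_diff pderiv_pCons)
        hence "D = poly (pderiv ?q) z" by (simp add: D_def)
        also have "\<dots> = L * poly (pderiv Q) z"
          unfolding Q_def by (subst AL) (simp add: pderiv_smult)
        finally show ?thesis .
      qed
      have "Re (u * (D / (P - w))) > 0"
        using k Ane lc unfolding PQ DQ Q_def by simp
      hence "Re ((u * D) / (P - w)) > 0" by simp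
      thus ?thesis by (rule re_div_pos_rev)
    qed
    define c where "c = u * D"
    have f0: "Re (cnj c * (P - w0)) > 0" using lin[OF w0] by (simp add: c_def)
    have f1: "Re (cnj c * (P - w1)) > 0" using lin[OF w1] by (simp add: c_def)
    have Pw: "P = s *\<^sub>R w0 + t *\<^sub>R w1" using pz by (simp add: P_def)
    have "P - (s *\<^sub>R w0 + t *\<^sub>R w1) = s *\<^sub>R (P - w0) + t *\<^sub>R (P - w1)"
      using st(3) by (simp add: algebra_simps flip: scaleR_add_left)
    moreover have "Re (cnj c * (s *\<^sub>R (P - w0) + t *\<^sub>R (P - w1))) = s * Re (cnj c * (P - w0)) + t * Re (cnj c * (P - w1))"
      by (simp add: scaleR_conv_of_real distrib_left)
    ultimately have "Re (cnj c * (P - (s *\<^sub>R w0 + t *\<^sub>R w1))) = s * Re (cnj c * (P - w0)) + t * Re (cnj c * (P - w1))"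
      by simp
    moreover have "s * Re (cnj c * (P - w0)) + t * Re (cnj c * (P - w1)) > 0"
    proof (cases "s = 0")
      case True then show ?thesis using st f1 by simp
    next
      case False then show ?thesis using st f0 f1
        by (simp add: add_pos_nonneg)
    qed
    ultimately show False using Pw by simp
  qed
qed

end
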